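(* Let $n=m+s$ and consider the system $$\begin{bmatrix}\dot x_a\\ \dot x_u\end{bmatrix}=[J(x)-R(x)]\begin{bmatrix}\nabla_{x_a}\mathcal H(x)\\ \nabla_{x_u}\mathcal H(x)\end{bmatrix}+\begin{bmatrix}u\\ -d_u(x)\end{bmatrix},$$ with $x=\operatorname{col}(x_a,x_u)$, $x_a\in\mathbb R^m$, $x_u\in\mathbb R^s$, $u\in\mathbb R^m$, smooth $\mathcal H:\mathbb R^n\to\mathbb R_+$, and $J=\begin{bmatrix}J_{aa}&J_{au}\\-J_{au}^\top&J_{uu}\end{bmatrix}=-J^\top$, $R=\begin{bmatrix}R_{aa}&R_{au}\\R_{au}^\top&R_{uu}\end{bmatrix}=R^\top\ge0$ (possibly state-dependent). Assume the unmatched disturbance is $d_u(x)=(J_{au}(x)+R_{au}(x))^\top\bar d_u$ for a constant $\bar d_u\in\mathbb R^m$, and that there exists an isolated $\bar x=(\bar x_a,\bar x_u)\in\mathbb R^n$ with $\bar x=\arg\min\mathbf H(x)$, where $\mathbf H(x):=\mathcal H(x)+x_a^\top\bar d_u$. Let $K_i\in\mathbb R^{m\times m}$ be symmetric positive definite, $J_{c_1}(x)=-J_{c_1}^\top(x)$, $R_{c_1}(x)>0$, and close the loop with $$u=[-J_{aa}+R_{aa}+J_{c_1}-R_{c_1}]\nabla_{x_a}\mathcal H+[J_{c_1}-R_{c_1}]K_i(x_a-x_c)+2R_{au}\nabla_{x_u}\mathcal H,$$ $$\dot x_c=(J_{au}+R_{au})\nabla_{x_u}\mathcal H,\qquad x_c\in\mathbb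 R^m$$ (that is, the controller with the parameter $R_{c_2}=0_{m\times m}$), written in the coordinates $w=(w_a,w_u,w_c)=(x_a,x_u,x_a-x_c)$. Then: (i) $\bar w=(\bar x_a,\bar x_u,K_i^{-1}\bar d_u)$ is a stable equilibrium of the closed-loop system; (ii) if the signal $Y_u:=\nabla_{w_a}\mathbf H(w_a,w_u)+K_i(w_c-\bar w_c)$, with $\bar w_c=K_i^{-1}\bar d_u$, is a detectable output of the closed loop, the equilibrium is asymptotically stable; (iii) the stability properties are global if $\mathbf H$ is radially unbounded.
   Context: $\nabla$ denotes the transposed gradient and $\nabla_{x_a},\nabla_{x_u},\nabla_{w_a}$ transposed partial gradients. "Detectable output" means that closed-loop solutions along which the output is identically zero converge to the equilibrium. All functions are smooth. *)

theory Defs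
  imports "HOL-Analysis.Analysis"
begin

inductive_set partials :: "('a::euclidean_space \<Rightarrow> real) \<Rightarrow> ('a \<Rightarrow> real) set"
  for f where
  base: "f \<in> partials f"
| step: "g \<in> partials f \<Longrightarrow> v \<in> Basis \<Longrightarrow>
         (\<lambda>x. frechet_derivative g (at x) v) \<in> partials f"

definition smooth_real :: "('a::euclidean_space \<Rightarrow> real) \<Rightarrow> bool" where
  "smooth_real f \<longleftrightarrow> (\<forall>g\<in>partials f. \<forall>x. g differentiable (at x))"

definition smooth :: "('a::euclidean_space \<Rightarrow> 'b::euclidean_space) \<Rightarrow> bool" where
  "smooth f \<longleftrightarrow> (\<forall>b\<in>Basis. smooth_real (\<lambda>x. f x \<bullet> b))"

definition grad :: "(real^'n \<Rightarrow> real) \<Rightarrow> real^'n \<Rightarrow> real^'n" where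
  "grad f x = (\<chi> i. frechet_derivative f (at x) (axis i 1))"

definition grad_a :: "((real^'m) \<times> (real^'s) \<Rightarrow> real) \<Rightarrow> (real^'m) \<times> (real^'s) \<Rightarrow> real^'m" where
  "grad_a H x = grad (\<lambda>a. H (a, snd x)) (fst x)"

definition grad_u :: "((real^'m) \<times> (real^'s) \<Rightarrow> real) \<Rightarrow> (real^'m) \<times> (real^'s) \<Rightarrow> real^'s" where
  "grad_u H x = grad (\<lambda>v. H (fst x, v)) (snd x)"

definition skew :: "real^'n^'n \<Rightarrow> bool" where
  "skew A \<longleftrightarrow> transpose A = - A"

definition sym_pd :: "real^'n^'n \<Rightarrow> bool" where
  "sym_pd A \<longleftrightarrow> transpose A = A \<and> (\<forall>v. v \<noteq> 0 \<longrightarrow> v \<bullet> (A *v v) > 0)"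

definition pos_def :: "real^'n^'n \<Rightarrow> bool" where
  "pos_def A \<longleftrightarrow> (\<forall>v. v \<noteq> 0 \<longrightarrow> v \<bullet> (A *v v) > 0)"

definition dist_u ::
  "((real^'m) \<times> (real^'s) \<Rightarrow> real^'s^'m) \<Rightarrow> ((real^'m) \<times> (real^'s) \<Rightarrow> real^'s^'m)
   \<Rightarrow> real^'m \<Rightarrow> (real^'m) \<times> (real^'s) \<Rightarrow> real^'s" where
  "dist_u Jau Rau dbar x = transpose (Jau x + Rau x) *v dbar"

definition plant_a ::
  "((real^'m) \<times> (real^'s) \<Rightarrow> real^'m^'m) \<Rightarrow> ((real^'m) \<times> (real^'s) \<Rightarrow> real^'s^'m)
   \<Rightarrow> ((real^'m) \<times> (real^'s) \<Rightarrow> real^'m^'m) \<Rightarrow> ((real^'m) \<times> (real^'s) \<Rightarrow> real^'s^'m)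
   \<Rightarrow> ((real^'m) \<times> (real^'s) \<Rightarrow> real) \<Rightarrow> (real^'m) \<times> (real^'s) \<Rightarrow> real^'m \<Rightarrow> real^'m" where
  "plant_a Jaa Jau Raa Rau H x u =
     (Jaa x - Raa x) *v grad_a H x + (Jau x - Rau x) *v grad_u H x + u"

definition plant_u ::
  "((real^'m) \<times> (real^'s) \<Rightarrow> real^'s^'m) \<Rightarrow> ((real^'m) \<times> (real^'s) \<Rightarrow> real^'s^'s)
   \<Rightarrow> ((real^'m) \<times> (real^'s) \<Rightarrow> real^'s^'m) \<Rightarrow> ((real^'m) \<times> (real^'s) \<Rightarrow> real^'s^'s)
   \<Rightarrow> ((real^'m) \<times> (real^'s) \<Rightarrow> real) \<Rightarrow> real^'m \<Rightarrow> (real^'m) \<times> (real^'s) \<Rightarrow> real^'s" where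
  "plant_u Jau Juu Rau Ruu H dbar x =
     (- transpose (Jau x) - transpose (Rau x)) *v grad_a H x + (Juu x - Ruu x) *v grad_u H x
     - dist_u Jau Rau dbar x"

definition ctrl_u ::
  "((real^'m) \<times> (real^'s) \<Rightarrow> real^'m^'m) \<Rightarrow> ((real^'m) \<times> (real^'s) \<Rightarrow> real^'m^'m)
   \<Rightarrow> ((real^'m) \<times> (real^'s) \<Rightarrow> real^'s^'m)
   \<Rightarrow> ((real^'m) \<times> (real^'s) \<Rightarrow> real^'m^'m) \<Rightarrow> ((real^'m) \<times> (real^'s) \<Rightarrow> real^'m^'m)
   \<Rightarrow> real^'m^'m \<Rightarrow> ((real^'m) \<times> (real^'s) \<Rightarrow> real)
   \<Rightarrow> (real^'m) \<times> (real^'s) \<Rightarrow> real^'m \<Rightarrow> real^'m" where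
  "ctrl_u Jaa Raa Rau Jc1 Rc1 K H x xc =
     (- Jaa x + Raa x + Jc1 x - Rc1 x) *v grad_a H x
     + (Jc1 x - Rc1 x) *v (K *v (fst x - xc))
     + (2::real) *\<^sub>R (Rau x *v grad_u H x)"

definition ctrl_c ::
  "((real^'m) \<times> (real^'s) \<Rightarrow> real^'s^'m) \<Rightarrow> ((real^'m) \<times> (real^'s) \<Rightarrow> real^'s^'m)
   \<Rightarrow> ((real^'m) \<times> (real^'s) \<Rightarrow> real) \<Rightarrow> (real^'m) \<times> (real^'s) \<Rightarrow> real^'m" where
  "ctrl_c Jau Rau H x = (Jau x + Rau x) *v grad_u H x"

definition closed_loop ::
  "((real^'m) \<times> (real^'s) \<Rightarrow> real^'m^'m) \<Rightarrow> ((real^'m) \<times> (real^'s) \<Rightarrow> real^'s^'m)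
   \<Rightarrow> ((real^'m) \<times> (real^'s) \<Rightarrow> real^'s^'s)
   \<Rightarrow> ((real^'m) \<times> (real^'s) \<Rightarrow> real^'m^'m) \<Rightarrow> ((real^'m) \<times> (real^'s) \<Rightarrow> real^'s^'m)
   \<Rightarrow> ((real^'m) \<times> (real^'s) \<Rightarrow> real^'s^'s)
   \<Rightarrow> ((real^'m) \<times> (real^'s) \<Rightarrow> real^'m^'m) \<Rightarrow> ((real^'m) \<times> (real^'s) \<Rightarrow> real^'m^'m)
   \<Rightarrow> real^'m^'m \<Rightarrow> ((real^'m) \<times> (real^'s) \<Rightarrow> real) \<Rightarrow> real^'m
   \<Rightarrow> (real^'m) \<times> (real^'s) \<times> (real^'m) \<Rightarrow> (real^'m) \<times> (real^'s) \<times> (real^'m)" where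
  "closed_loop Jaa Jau Juu Raa Rau Ruu Jc1 Rc1 K H dbar w =
     (let (wa, wu, wc) = w;
          x = (wa, wu);
          xc = wa - wc;
          u = ctrl_u Jaa Raa Rau Jc1 Rc1 K H x xc;
          dxa = plant_a Jaa Jau Raa Rau H x u;
          dxu = plant_u Jau Juu Rau Ruu H dbar x;
          dxc = ctrl_c Jau Rau H x
      in (dxa, dxu, dxa - dxc))"

definition sol_on :: "('a::real_normed_vector \<Rightarrow> 'a) \<Rightarrow> (real \<Rightarrow> 'a) \<Rightarrow> real \<Rightarrow> bool" where
  "sol_on F w T \<longleftrightarrow> T \<ge> 0 \<and>
     (\<forall>t\<in>{0..T}. (w has_vector_derivative F (w t)) (at t within {0..T}))"

definition sol :: "('a::real_normed_vector \<Rightarrow> 'a) \<Rightarrow> (real \<Rightarrow> 'a) \<Rightarrow> bool" where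
  "sol F w \<longleftrightarrow> (\<forall>t\<ge>0. (w has_vector_derivative F (w t)) (at t within {0..}))"

definition equilibrium :: "('a::real_normed_vector \<Rightarrow> 'a) \<Rightarrow> 'a \<Rightarrow> bool" where
  "equilibrium F e \<longleftrightarrow> F e = 0"

definition stable :: "('a::real_normed_vector \<Rightarrow> 'a) \<Rightarrow> 'a \<Rightarrow> bool" where
  "stable F e \<longleftrightarrow> (\<forall>\<epsilon>>0. \<exists>\<delta>>0. \<forall>w T. sol_on F w T \<and> dist (w 0) e < \<delta> \<longrightarrow>
                     (\<forall>t\<in>{0..T}. dist (w t) e < \<epsilon>))"

definition asymp_stable :: "('a::real_normed_vector \<Rightarrow> 'a) \<Rightarrow> 'a \<Rightarrow> bool" where
  "asymp_stable F e \<longleftrightarrow> stable F e \<and>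
     (\<exists>\<delta>>0. \<forall>w. sol F w \<and> dist (w 0) e < \<delta> \<longrightarrow> (w \<longlongrightarrow> e) at_top)"

definition globally_stable :: "('a::real_normed_vector \<Rightarrow> 'a) \<Rightarrow> 'a \<Rightarrow> bool" where
  "globally_stable F e \<longleftrightarrow> stable F e \<and>
     (\<forall>r. \<exists>B. \<forall>w T. sol_on F w T \<and> dist (w 0) e < r \<longrightarrow> (\<forall>t\<in>{0..T}. dist (w t) e < B))"

definition globally_asymp_stable :: "('a::real_normed_vector \<Rightarrow> 'a) \<Rightarrow> 'a \<Rightarrow> bool" where
  "globally_asymp_stable F e \<longleftrightarrow> globally_stable F e \<and>
     (\<forall>w. sol F w \<longrightarrow> (w \<longlongrightarrow> e) at_top)"

definition detectable :: "('a::real_normed_vector \<Rightarrow> 'a) \<Rightarrow> ('a \<Rightarrow> 'b::zero) \<Rightarrow> 'a \<Rightarrow> bool" where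
  "detectable F Y e \<longleftrightarrow>
     (\<forall>w. sol F w \<and> (\<forall>t\<ge>0. Y (w t) = 0) \<longrightarrow> (w \<longlongrightarrow> e) at_top)"

definition radially_unbounded :: "('a::real_normed_vector \<Rightarrow> real) \<Rightarrow> bool" where
  "radially_unbounded f \<longleftrightarrow> filterlim f at_top at_infinity"

end

theory Submission
  imports Defs "HOL-Complex_Analysis.Great_Picard"
begin


locale lyap =
  fixes F :: "'a::euclidean_space \<Rightarrow> 'a" and W :: "'a \<Rightarrow> real" and DW :: "'a \<Rightarrow> 'a \<Rightarrow> real" and e :: 'a
  assumes contF: "continuous_on UNIV F"
    and W_deriv: "\<And>p. (W has_derivative DW p) (at p)"
    and Wd_nonpos: "\<And>p. DW p (F p) \<le> 0"
    and W_min: "\<And>p. p \<noteq> e \<Longrightarrow> W e < W p"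
begin

lemma contW: "continuous_on S W"
  using W_deriv by (meson continuous_at_imp_continuous_on has_derivative_continuous)

lemma isContW: "isCont W p"
  using W_deriv has_derivative_continuous by blast

lemma chain:
  assumes "(w has_vector_derivative F (w t)) (at t within S)"
  shows "((\<lambda>t. W (w t)) has_real_derivative DW (w t) (F (w t))) (at t within S)"
proof -
  have "((W \<circ> w) has_derivative (DW (w t) \<circ> (\<lambda>h. h *\<^sub>R F (w t)))) (at t within S)"
    apply (rule diff_chain_within)
    using assms apply (simp add: has_vector_derivative_def)
    using W_deriv has_derivative_at_withinI by blast
  moreover have "(DW (w t) \<circ> (\<lambda>h. h *\<^sub>R F (w t))) = (\<lambda>h. h * DW (w t) (F (w t)))"
    using W_deriv[of "w t"] unfolding has_derivative_def
    by (auto simp: o_def linear_simps)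
  moreover have e: "(*) (DW (w t) (F (w t))) = (\<lambda>h. h * DW (w t) (F (w t)))" by (auto simp: fun_eq_iff)
  ultimately show ?thesis
    unfolding has_field_derivative_def e by (simp add: o_def)
qed

lemma sol_on_cont: "sol_on F w T \<Longrightarrow> continuous_on {0..T} w"
  unfolding sol_on_def
  by (meson continuous_on_eq_continuous_within has_vector_derivative_continuous)

lemma sol_sol_on:
  assumes "sol F w" "T \<ge> 0" shows "sol_on F w T"
  unfolding sol_on_def
proof (intro conjI ballI)
  fix t assume "t \<in> {0..T}"
  hence "(w has_vector_derivative F (w t)) (at t within {0..})" using assms unfolding sol_def by auto
  then show "(w has_vector_derivative F (w t)) (at t within {0..T})"
    by (rule has_vector_derivative_within_subset) auto
qed (use assms in auto)

lemma W_dec: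
  assumes "sol_on F w T" "0 \<le> s" "s \<le> t" "t \<le> T"
  shows "W (w t) \<le> W (w s)"
proof -
  have "\<exists>x\<in>{s..t}. W (w t) - W (w s) = (\<lambda>h. h * DW (w x) (F (w x))) (t - s)"
  proof (rule mvt_very_simple[of s t "\<lambda>t. W (w t)"])
    show "s \<le> t" by fact
    fix x assume "s \<le> x" "x \<le> t"
    hence "(w has_vector_derivative F (w x)) (at x within {s..t})"
      using assms unfolding sol_on_def
      by (meson atLeastAtMost_iff atLeastatMost_subset_iff dual_order.trans has_vector_derivative_within_subset)
    from chain[OF this] show "((\<lambda>t. W (w t)) has_derivative (\<lambda>h. h * DW (w x) (F (w x)))) (at x within {s..t})"
      unfolding has_field_derivative_def
      by (metis (no_types, lifting) ext mult.commute)
  qed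
  then obtain x where "W (w t) - W (w s) = (t - s) * DW (w x) (F (w x))" by auto
  moreover have "(t - s) * DW (w x) (F (w x)) \<le> 0"
    using assms Wd_nonpos[of "w x"] by (simp add: mult_nonneg_nonpos)
  ultimately show ?thesis by simp
qed


lemma sphere_bound:
  assumes "\<epsilon> > 0"
  shows "\<exists>m > W e. \<forall>p. dist p e = \<epsilon> \<longrightarrow> m \<le> W p"
proof (cases "sphere e \<epsilon> = {}")
  case True
  then show ?thesis by (intro exI[of _ "W e + 1"]) (auto simp: dist_commute)
next
  case False
  obtain p0 where p0: "p0 \<in> sphere e \<epsilon>" "\<And>p. p \<in> sphere e \<epsilon> \<Longrightarrow> W p0 \<le> W p"
    using continuous_attains_inf[OF compact_sphere False contW] by blast
  have "p0 \<noteq> e" using p0(1) assms by auto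
  then have "W e < W p0" by (rule W_min)
  then show ?thesis using p0 by (intro exI[of _ "W p0"]) (auto simp: dist_commute)
qed

lemma stable: "stable F e"
  unfolding stable_def
proof (intro allI impI)
  fix \<epsilon> :: real assume "\<epsilon> > 0"
  obtain m where m: "m > W e" "\<And>p. dist p e = \<epsilon> \<Longrightarrow> m \<le> W p"
    using sphere_bound[OF \<open>\<epsilon> > 0\<close>] by blast
  obtain d where d: "d > 0" "\<And>p. dist p e < d \<Longrightarrow> dist (W p) (W e) < m - W e"
    using contW[of UNIV, unfolded continuous_on_iff] m(1) by (metis UNIV_I diff_gt_0_iff_gt)
  show "\<exists>\<delta>>0. \<forall>w T. sol_on F w T \<and> dist (w 0) e < \<delta> \<longrightarrow> (\<forall>t\<in>{0..T}. dist (w t) e < \<epsilon>)"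
  proof (intro exI[of _ "min d \<epsilon>"] conjI allI impI ballI)
    show "min d \<epsilon> > 0" using d \<open>\<epsilon> > 0\<close> by simp
    fix w T t assume H: "sol_on F w T \<and> dist (w 0) e < min d \<epsilon>" and t: "t \<in> {0..T}"
    show "dist (w t) e < \<epsilon>"
    proof (rule ccontr)
      assume "\<not> dist (w t) e < \<epsilon>"
      have "continuous_on {0..t} (\<lambda>s. dist (w s) e)"
        using sol_on_cont[of w T] H t
        by (intro continuous_intros) (auto elim: continuous_on_subset)
      then obtain s where s: "0 \<le> s" "s \<le> t" "dist (w s) e = \<epsilon>"
        using IVT'[of "\<lambda>s. dist (w s) e" 0 \<epsilon> t] H t \<open>\<not> dist (w t) e < \<epsilon>\<close> by auto
      have "m \<le> W (w s)" using m(2) s(3) by blast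
      moreover have "W (w s) \<le> W (w 0)" using W_dec[of w T 0 s] H s t by auto
      moreover have "W (w 0) < m" using d(2)[of "w 0"] H by (auto simp: dist_real_def)
      ultimately show False by simp
    qed
  qed
qed


lemma lin_bound:
  assumes w: "sol F w" and ab: "0 \<le> a" "a \<le> b" and B: "\<And>\<tau>. \<tau> \<in> {a..b} \<Longrightarrow> norm (F (w \<tau>) - y) \<le> B"
  shows "norm (w b - w a - (b - a) *\<^sub>R y) \<le> (b - a) * B"
proof -
  define g where "g \<tau> = w \<tau> - \<tau> *\<^sub>R y" for \<tau>
  have "norm (g b - g a) \<le> B * norm (b - a)"
  proof (rule differentiable_bound[of "{a..b}" g "\<lambda>x h. h *\<^sub>R (F (w x) - y)"])
    show "convex {a..b}" by simp
    fix x assume x: "x \<in> {a..b}"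
    then have "(w has_vector_derivative F (w x)) (at x within {0..})" using w ab unfolding sol_def by auto
    then have "(w has_vector_derivative F (w x)) (at x within {a..b})"
      by (rule has_vector_derivative_within_subset) (use ab in auto)
    then have "(g has_vector_derivative F (w x) - y) (at x within {a..b})"
      unfolding g_def by (auto intro!: derivative_eq_intros)
    then show "(g has_derivative (\<lambda>h. h *\<^sub>R (F (w x) - y))) (at x within {a..b})"
      by (simp add: has_vector_derivative_def)
    have "onorm (\<lambda>h::real. h *\<^sub>R (F (w x) - y)) = norm (F (w x) - y)"
      using onorm_scaleR_left[of "\<lambda>x::real. x" "F (w x) - y"] by (simp add: onorm_id bounded_linear_ident)
    then show "onorm (\<lambda>h::real. h *\<^sub>R (F (w x) - y)) \<le> B" using B x by simp
  qed (use ab in auto)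
  then show ?thesis using ab by (simp add: g_def algebra_simps)
qed

lemma lin_bound2:
  assumes w: "sol F w" and ab: "0 \<le> a" "0 \<le> b" and B: "\<And>\<tau>. \<tau> \<in> closed_segment a b \<Longrightarrow> norm (F (w \<tau>) - y) \<le> B"
  shows "norm (w b - w a - (b - a) *\<^sub>R y) \<le> \<bar>b - a\<bar> * B"
proof (cases "a \<le> b")
  case True
  then show ?thesis using lin_bound[OF w ab(1) True] B by (simp add: closed_segment_eq_real_ivl)
next
  case False
  then have "norm (w a - w b - (a - b) *\<^sub>R y) \<le> (a - b) * B"
    using lin_bound[OF w ab(2), of a y B] B by (simp add: closed_segment_eq_real_ivl)
  moreover have "w a - w b - (a - b) *\<^sub>R y = - (w b - w a - (b - a) *\<^sub>R y)" by (simp add: algebra_simps)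
  ultimately show ?thesis using False by (simp only: norm_minus_cancel) simp
qed


lemma W_ge: "W e \<le> W p"
  using W_min[of p] by (cases "p = e") auto

lemma attract:
  assumes D: "\<And>v. sol F v \<Longrightarrow> (\<forall>t\<ge>0. DW (v t) (F (v t)) = 0) \<Longrightarrow> (v \<longlongrightarrow> e) at_top"
    and w: "sol F w" and R: "\<And>t. t \<ge> 0 \<Longrightarrow> w t \<in> cball e R"
  shows "(w \<longlongrightarrow> e) at_top"
proof -
  define c where "c = Inf ((\<lambda>t. W (w t)) ` {0..})"
  have bdd: "bdd_below ((\<lambda>t. W (w t)) ` {0..})" using W_ge by (intro bdd_belowI[where m="W e"]) auto
  have c1: "c \<le> W (w t)" if "t \<ge> 0" for t
    unfolding c_def using bdd that by (auto intro: cInf_lower)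
  have c2: "\<exists>T\<ge>0. \<forall>t\<ge>T. W (w t) < c + \<eta>" if "\<eta> > 0" for \<eta>
  proof -
    have "Inf ((\<lambda>t. W (w t)) ` {0..}) < c + \<eta>" using that c_def by simp
    then obtain t0 where t0: "t0 \<ge> 0" "W (w t0) < c + \<eta>"
      using cInf_less_iff[OF _ bdd] by auto
    have "W (w t) < c + \<eta>" if "t \<ge> t0" for t
      using W_dec[OF sol_sol_on[OF w, of t], of t0 t] t0 that by auto
    then show ?thesis using t0 by blast
  qed
  have Wlim: "((\<lambda>t. W (w t)) \<longlongrightarrow> c) at_top"
  proof (rule order_tendstoI)
    fix a assume "a < c"
    have "\<forall>t\<ge>0. a < W (w t)" using c1 \<open>a < c\<close> by (meson less_le_trans)
    then show "\<forall>\<^sub>F t in at_top. a < W (w t)"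
      unfolding eventually_at_top_linorder by blast
  next
    fix a assume "c < a"
    then obtain T where "T \<ge> 0" "\<forall>t\<ge>T. W (w t) < c + (a - c)" using c2[of "a - c"] by auto
    then show "\<forall>\<^sub>F t in at_top. W (w t) < a"
      unfolding eventually_at_top_linorder by auto
  qed
  obtain G where G: "G > 0" "\<And>p. p \<in> cball e R \<Longrightarrow> norm (F p) \<le> G"
  proof -
    have "compact (F ` cball e R)"
      by (rule compact_continuous_image) (auto intro: continuous_on_subset[OF contF])
    then obtain G where "G > 0" "\<forall>x\<in>F ` cball e R. norm x \<le> G"
      using compact_imp_bounded bounded_pos by metis
    then show ?thesis using that by auto
  qed
  have lip: "norm (w b - w a) \<le> \<bar>b - a\<bar> * G" if "a \<ge> 0" "b \<ge> 0" for a b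
  proof -
    have "norm (w b - w a - (b - a) *\<^sub>R 0) \<le> \<bar>b - a\<bar> * G"
    proof (rule lin_bound2[OF w that(1,2)])
      fix \<tau> assume "\<tau> \<in> closed_segment a b"
      then have "\<tau> \<ge> 0" using that by (auto simp: closed_segment_eq_real_ivl split: if_splits)
      then show "norm (F (w \<tau>) - 0) \<le> G" using G R by auto
    qed
    then show ?thesis by simp
  qed
  define f where "f n s = w (real n + s)" for n :: nat and s :: real
  obtain k where k: "strict_mono (k::nat\<Rightarrow>nat)"
    and kc: "\<And>q. q \<in> \<rat> \<inter> {0..} \<Longrightarrow> \<exists>l. (\<lambda>n. f (k n) q) \<longlonglongrightarrow> l"
  proof (rule function_convergent_subsequence[of "\<rat> \<inter> {0..}" f "norm e + R"])
    show "countable (\<rat> \<inter> {0..})" using countable_rat by auto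
    fix n :: nat and x :: real assume "x \<in> \<rat> \<inter> {0..}"
    then have "w (real n + x) \<in> cball e R" using R by auto
    then have "norm (w (real n + x) - e) \<le> R" by (simp add: dist_norm norm_minus_commute)
    moreover have "norm (w (real n + x)) \<le> norm e + norm (w (real n + x) - e)"
      using norm_triangle_ineq[of e "w (real n + x) - e"] by simp
    ultimately show "norm (f n x) \<le> norm e + R" unfolding f_def by linarith
  qed auto
  have conv: "convergent (\<lambda>n. w (real (k n) + s))" if s: "s \<ge> 0" for s
  proof -
    have "Cauchy (\<lambda>n. w (real (k n) + s))"
    proof (rule metric_CauchyI)
      fix \<epsilon> :: real assume "\<epsilon> > 0"
      obtain q where q: "q \<in> \<rat>" "s < q" "q < s + \<epsilon> / (3 * G)"
        using Rats_dense_in_real[of s "s + \<epsilon> / (3 * G)"] \<open>\<epsilon> > 0\<close> G by auto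
      have "q \<in> \<rat> \<inter> {0..}" using q s by auto
      then obtain l where "(\<lambda>n. f (k n) q) \<longlonglongrightarrow> l" using kc by blast
      then have "Cauchy (\<lambda>n. f (k n) q)" by (rule LIMSEQ_imp_Cauchy)
      then obtain M where M: "\<And>m n. m \<ge> M \<Longrightarrow> n \<ge> M \<Longrightarrow> dist (f (k m) q) (f (k n) q) < \<epsilon> / 3"
        using \<open>\<epsilon> > 0\<close> unfolding Cauchy_def by (meson divide_pos_pos zero_less_numeral)
      have near: "dist (w (real (k n) + s)) (f (k n) q) \<le> \<epsilon> / 3" for n
      proof -
        have "norm (w (real (k n) + q) - w (real (k n) + s)) \<le> \<bar>q - s\<bar> * G"
          using lip[of "real (k n) + s" "real (k n) + q"] s q by simp
        also have "\<dots> \<le> \<epsilon> / (3 * G) * G" using q G by (intro mult_right_mono) auto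
        also have "\<dots> = \<epsilon> / 3" using G by simp
        finally show ?thesis by (simp add: f_def dist_norm norm_minus_commute)
      qed
      show "\<exists>M. \<forall>m\<ge>M. \<forall>n\<ge>M. dist (w (real (k m) + s)) (w (real (k n) + s)) < \<epsilon>"
      proof (intro exI[of _ M] allI impI)
        fix m n assume "m \<ge> M" "n \<ge> M"
        have "dist (w (real (k m) + s)) (w (real (k n) + s))
              \<le> dist (w (real (k m) + s)) (f (k m) q) + dist (f (k m) q) (f (k n) q) + dist (w (real (k n) + s)) (f (k n) q)"
          using dist_triangle[of "w (real (k m) + s)" "w (real (k n) + s)" "f (k m) q"]
            dist_triangle[of "f (k m) q" "w (real (k n) + s)" "f (k n) q"]
            dist_commute[of "w (real (k n) + s)" "f (k n) q"] by linarith
        also have "\<dots> < \<epsilon>/3 + \<epsilon>/3 + \<epsilon>/3" using near[of m] near[of n] M[OF \<open>m \<ge> M\<close> \<open>n \<ge> M\<close>] by linarith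
        finally show "dist (w (real (k m) + s)) (w (real (k n) + s)) < \<epsilon>" by simp
      qed
    qed
    then show ?thesis by (simp add: Cauchy_convergent_iff)
  qed
  define v where "v s = lim (\<lambda>n. w (real (k n) + s))" for s
  have vlim: "(\<lambda>n. w (real (k n) + s)) \<longlonglongrightarrow> v s" if "s \<ge> 0" for s
    using conv[OF that] unfolding v_def by (simp add: convergent_LIMSEQ_iff)
  have vR: "v s \<in> cball e R" if "s \<ge> 0" for s
    by (rule Lim_in_closed_set[OF closed_cball _ _ vlim[OF that]]) (use R that in auto)
  have ucont: "uniformly_continuous_on (cball e R) F"
    by (rule compact_uniformly_continuous) (auto intro: continuous_on_subset[OF contF])
  have vder: "(v has_vector_derivative F (v s)) (at s within {0..})" if s: "s \<ge> 0" for s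
    unfolding has_vector_derivative_def has_derivative_within_alt
  proof (intro conjI allI impI)
    show "bounded_linear (\<lambda>h. h *\<^sub>R F (v s))" by (rule bounded_linear_scaleR_left)
    fix \<epsilon> :: real assume "\<epsilon> > 0"
    obtain d1 where d1: "d1 > 0" "\<And>p q. p \<in> cball e R \<Longrightarrow> q \<in> cball e R \<Longrightarrow> dist p q < d1 \<Longrightarrow> dist (F p) (F q) < \<epsilon>"
      using ucont \<open>\<epsilon> > 0\<close> unfolding uniformly_continuous_on_def by metis
    show "\<exists>d>0. \<forall>t\<in>{0..}. norm (t - s) < d \<longrightarrow> norm (v t - v s - (t - s) *\<^sub>R F (v s)) \<le> \<epsilon> * norm (t - s)"
    proof (intro exI[of _ "d1 / G"] conjI ballI impI)
      show "d1 / G > 0" using d1 G by simp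
      fix t :: real assume t: "t \<in> {0..}" "norm (t - s) < d1 / G"
      have bnd: "norm (w (real (k n) + t) - w (real (k n) + s) - (t - s) *\<^sub>R F (w (real (k n) + s))) \<le> \<bar>t - s\<bar> * \<epsilon>" for n
      proof -
        have "norm (w (real (k n) + t) - w (real (k n) + s) - ((real (k n) + t) - (real (k n) + s)) *\<^sub>R F (w (real (k n) + s)))
              \<le> \<bar>(real (k n) + t) - (real (k n) + s)\<bar> * \<epsilon>"
        proof (rule lin_bound2[OF w])
          show "0 \<le> real (k n) + s" "0 \<le> real (k n) + t" using s t by auto
          fix \<tau> assume \<tau>: "\<tau> \<in> closed_segment (real (k n) + s) (real (k n) + t)"
          then have \<tau>0: "\<tau> \<ge> 0" using s t by (auto simp: closed_segment_eq_real_ivl split: if_splits)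
          have "\<bar>\<tau> - (real (k n) + s)\<bar> \<le> \<bar>t - s\<bar>"
            using \<tau> by (auto simp: closed_segment_eq_real_ivl split: if_splits)
          then have "norm (w \<tau> - w (real (k n) + s)) \<le> \<bar>t - s\<bar> * G"
          proof -
            have "norm (w \<tau> - w (real (k n) + s)) \<le> \<bar>\<tau> - (real (k n) + s)\<bar> * G"
              using lip[of "real (k n) + s" \<tau>] \<tau>0 s by simp
            also have "\<dots> \<le> \<bar>t - s\<bar> * G"
              by (rule mult_right_mono) (use \<open>\<bar>\<tau> - (real (k n) + s)\<bar> \<le> \<bar>t - s\<bar>\<close> G in auto)
            finally show ?thesis .
          qed
          also have "\<dots> < d1" using t G by (simp add: pos_less_divide_eq)
          finally have "dist (F (w \<tau>)) (F (w (real (k n) + s))) < \<epsilon>"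
            using d1(2)[of "w \<tau>" "w (real (k n) + s)"] R \<tau>0 s by (simp add: dist_norm)
          then show "norm (F (w \<tau>) - F (w (real (k n) + s))) \<le> \<epsilon>" by (simp add: dist_norm)
        qed
        then show ?thesis by simp
      qed
      have "(\<lambda>n. w (real (k n) + t) - w (real (k n) + s) - (t - s) *\<^sub>R F (w (real (k n) + s)))
            \<longlonglongrightarrow> v t - v s - (t - s) *\<^sub>R F (v s)"
        using vlim[of t] vlim[of s] s t
        by (intro tendsto_intros isCont_tendsto_compose[where g=F]) (auto intro: continuous_on_interior[OF contF])
      then have "norm (v t - v s - (t - s) *\<^sub>R F (v s)) \<le> \<bar>t - s\<bar> * \<epsilon>"
        by (rule Lim_norm_ubound[OF trivial_limit_sequentially]) (use bnd in auto)
      then show "norm (v t - v s - (t - s) *\<^sub>R F (v s)) \<le> \<epsilon> * norm (t - s)" by (simp add: mult.commute)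
    qed
  qed
  have vsol: "sol F v" unfolding sol_def using vder by auto
  have kinf: "filterlim (\<lambda>n. real (k n) + s) at_top sequentially" for s
  proof -
    have "filterlim (\<lambda>n. real (k n)) at_top sequentially"
      using filterlim_compose[OF filterlim_real_sequentially filterlim_subseq[OF k]] by (simp add: o_def)
    from filterlim_tendsto_add_at_top[OF tendsto_const this, of s] show ?thesis by (simp add: add.commute)
  qed
  have Wv: "W (v s) = c" if "s \<ge> 0" for s
  proof -
    have "(\<lambda>n. W (w (real (k n) + s))) \<longlonglongrightarrow> W (v s)"
      using vlim[OF that] by (intro isCont_tendsto_compose[where g=W]) (auto intro: isContW)
    moreover have "(\<lambda>n. W (w (real (k n) + s))) \<longlonglongrightarrow> c"
      using filterlim_compose[OF Wlim kinf[of s]] by (simp add: o_def)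
    ultimately show ?thesis by (rule LIMSEQ_unique)
  qed
  have Wd0: "DW (v s) (F (v s)) = 0" if s: "s \<ge> 0" for s
  proof -
    have d1: "((\<lambda>t. W (v t)) has_vector_derivative DW (v s) (F (v s))) (at s within {0..})"
      using chain[OF vder[OF s]] by (simp add: has_real_derivative_iff_has_vector_derivative)
    have dc: "((\<lambda>t. c) has_vector_derivative 0) (at s within {0..})" by (rule derivative_intros)
    have d2: "((\<lambda>t. W (v t)) has_vector_derivative 0) (at s within {0..})"
      by (rule has_vector_derivative_transform[OF _ _ dc]) (use s Wv in auto)
    have "at s within {0..} \<noteq> bot"
    proof -
      have "s islimpt {0..}"
        unfolding islimpt_approachable
      proof (intro allI impI)
        fix \<epsilon> :: real assume "\<epsilon> > 0"
        then show "\<exists>x'\<in>{0..}. x' \<noteq> s \<and> dist x' s < \<epsilon>"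
          using s by (intro bexI[of _ "s + \<epsilon>/2"]) (auto simp: dist_real_def)
      qed
      then show ?thesis using trivial_limit_within by blast
    qed
    then show ?thesis using vector_derivative_unique_within d1 d2 by blast
  qed
  have "(v \<longlongrightarrow> e) at_top" using D[OF vsol] Wd0 by auto
  then have "((\<lambda>t. W (v t)) \<longlongrightarrow> W e) at_top"
    by (intro isCont_tendsto_compose[where g=W]) (auto intro: isContW)
  moreover have "((\<lambda>t. W (v t)) \<longlongrightarrow> c) at_top"
  proof (rule tendsto_eventually)
    show "\<forall>\<^sub>F t in at_top. W (v t) = c" using Wv unfolding eventually_at_top_linorder by blast
  qed
  ultimately have ce: "c = W e" using tendsto_unique[OF trivial_limit_at_top_linorder] by metis
  show ?thesis
    unfolding tendsto_iff
  proof (intro allI impI)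
    fix \<epsilon> :: real assume "\<epsilon> > 0"
    define C where "C = cball e R \<inter> {p. \<epsilon> \<le> dist p e}"
    have "compact C" unfolding C_def
      by (intro compact_Int_closed compact_cball closed_Collect_le continuous_intros)
    show "\<forall>\<^sub>F t in at_top. dist (w t) e < \<epsilon>"
    proof (cases "C = {}")
      case True
      have "dist (w t) e < \<epsilon>" if "t \<ge> 0" for t
        using R[OF that] True by (auto simp: C_def dist_commute not_le)
      then show ?thesis unfolding eventually_at_top_linorder by blast
    next
      case False
      obtain p0 where p0: "p0 \<in> C" "\<And>p. p \<in> C \<Longrightarrow> W p0 \<le> W p"
        using continuous_attains_inf[OF \<open>compact C\<close> False contW] by blast
      have "p0 \<noteq> e" using p0(1) \<open>\<epsilon> > 0\<close> by (auto simp: C_def)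
      then have "c < W p0" using W_min ce by simp
      then obtain T where T: "T \<ge> 0" "\<forall>t\<ge>T. W (w t) < c + (W p0 - c)" using c2[of "W p0 - c"] by auto
      have "dist (w t) e < \<epsilon>" if "t \<ge> T" for t
      proof (rule ccontr)
        assume "\<not> dist (w t) e < \<epsilon>"
        then have "w t \<in> C" using R[of t] T that by (auto simp: C_def)
        then show False using p0(2)[of "w t"] T that by auto
      qed
      then show ?thesis unfolding eventually_at_top_linorder by blast
    qed
  qed
qed

lemma asymp:
  assumes D: "\<And>v. sol F v \<Longrightarrow> (\<forall>t\<ge>0. DW (v t) (F (v t)) = 0) \<Longrightarrow> (v \<longlongrightarrow> e) at_top"
  shows "asymp_stable F e"
  unfolding asymp_stable_def
proof (intro conjI stable)
  obtain \<delta> where \<delta>: "\<delta> > 0" "\<And>w T. sol_on F w T \<and> dist (w 0) e < \<delta> \<Longrightarrow> (\<forall>t\<in>{0..T}. dist (w t) e < 1)"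
    using stable unfolding stable_def by (meson zero_less_one)
  show "\<exists>\<delta>>0. \<forall>w. sol F w \<and> dist (w 0) e < \<delta> \<longrightarrow> (w \<longlongrightarrow> e) at_top"
  proof (intro exI[of _ \<delta>] conjI allI impI)
    fix w assume w: "sol F w \<and> dist (w 0) e < \<delta>"
    have "w t \<in> cball e 1" if "t \<ge> 0" for t
    proof -
      have "dist (w t) e < 1" using \<delta>(2)[of w t] sol_sol_on[of w t] w that by auto
      then show ?thesis by (simp add: dist_commute)
    qed
    then show "(w \<longlongrightarrow> e) at_top" using attract[OF D] w by blast
  qed (use \<delta> in auto)
qed

lemma glob_stable:
  assumes B: "\<And>M. bounded {p. W p \<le> M}"
  shows "globally_stable F e"
  unfolding globally_stable_def
proof (intro conjI stable allI)
  fix r :: real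
  show "\<exists>B. \<forall>w T. sol_on F w T \<and> dist (w 0) e < r \<longrightarrow> (\<forall>t\<in>{0..T}. dist (w t) e < B)"
  proof (cases "r > 0")
    case False
    have "\<not> dist p e < r" for p :: 'a using False zero_le_dist[of p e] by linarith
    then show ?thesis by blast
  next
    case True
    obtain p0 where p0: "\<And>p. p \<in> cball e r \<Longrightarrow> W p \<le> W p0"
      using continuous_attains_sup[OF compact_cball _ contW, of e r] True by fastforce
    obtain B where "B > 0" "{p. W p \<le> W p0} \<subseteq> ball e B" using bounded_subset_ballD[OF B] by blast
    show ?thesis
    proof (intro exI[of _ B] allI impI ballI)
      fix w T t assume H: "sol_on F w T \<and> dist (w 0) e < r" and t: "t \<in> {0..T}"
      have "W (w t) \<le> W (w 0)" using W_dec[of w T 0 t] H t by auto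
      also have "\<dots> \<le> W p0" using p0[of "w 0"] H by (auto simp: dist_commute)
      finally show "dist (w t) e < B" using \<open>{p. W p \<le> W p0} \<subseteq> ball e B\<close> by (auto simp: dist_commute)
    qed
  qed
qed

lemma glob_asymp:
  assumes B: "\<And>M. bounded {p. W p \<le> M}"
    and D: "\<And>v. sol F v \<Longrightarrow> (\<forall>t\<ge>0. DW (v t) (F (v t)) = 0) \<Longrightarrow> (v \<longlongrightarrow> e) at_top"
  shows "globally_asymp_stable F e"
  unfolding globally_asymp_stable_def
proof (intro conjI glob_stable[OF B] allI impI)
  fix w assume w: "sol F w"
  obtain R where "R > 0" "{p. W p \<le> W (w 0)} \<subseteq> ball e R" using bounded_subset_ballD[OF B] by blast
  have "w t \<in> cball e R" if "t \<ge> 0" for t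
  proof -
    have "W (w t) \<le> W (w 0)" using W_dec[OF sol_sol_on[OF w that], of 0 t] that by auto
    then show ?thesis using \<open>{p. W p \<le> W (w 0)} \<subseteq> ball e R\<close> by auto
  qed
  then show "(w \<longlongrightarrow> e) at_top" using attract[OF D w] by blast
qed

end


lemma smooth_real_diff: "smooth_real f \<Longrightarrow> f differentiable (at x)"
  unfolding smooth_real_def by (auto intro: partials.base)

lemma smooth_real_partial_cont:
  assumes "smooth_real f" "b \<in> Basis"
  shows "continuous_on UNIV (\<lambda>x. frechet_derivative f (at x) b)"
proof -
  have "(\<lambda>x. frechet_derivative f (at x) b) \<in> partials f" using assms(2) by (auto intro: partials.intros)
  then have "\<forall>x. (\<lambda>x. frechet_derivative f (at x) b) differentiable (at x)" using assms(1) unfolding smooth_real_def by blast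
  then show ?thesis by (meson continuous_at_imp_continuous_on differentiable_imp_continuous_within)
qed

lemma smooth_cont:
  fixes A :: "'a::euclidean_space \<Rightarrow> 'b::euclidean_space"
  assumes "smooth A" shows "continuous_on UNIV A"
proof (rule continuous_on_componentwise[THEN iffD2], intro ballI)
  fix b :: 'b assume "b \<in> Basis"
  then have "smooth_real (\<lambda>x. A x \<bullet> b)" using assms unfolding smooth_def by blast
  then have "\<forall>x. (\<lambda>x. A x \<bullet> b) differentiable (at x)" using smooth_real_diff by blast
  then show "continuous_on UNIV (\<lambda>x. A x \<bullet> b)" by (meson continuous_at_imp_continuous_on differentiable_imp_continuous_within)
qed

lemma smooth_scalar:
  fixes H :: "'a::euclidean_space \<Rightarrow> real"
  assumes "smooth H" shows "smooth_real H"
  using assms unfolding smooth_def by simp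

lemma mv_cont[continuous_intros]:
  fixes A :: "'a::topological_space \<Rightarrow> real^'n^'m"
  assumes "continuous_on S A" "continuous_on S v"
  shows "continuous_on S (\<lambda>x. A x *v v x)"
  unfolding matrix_vector_mult_def
  by (intro continuous_intros assms)

lemma transpose_cont[continuous_intros]:
  fixes A :: "'a::topological_space \<Rightarrow> real^'n^'m"
  assumes "continuous_on S A"
  shows "continuous_on S (\<lambda>x. transpose (A x))"
  unfolding transpose_def
  by (intro continuous_intros assms)

context
  fixes H :: "(real^'m) \<times> (real^'s) \<Rightarrow> real"
  assumes Hd: "\<And>x. H differentiable (at x)"
begin

definition "DH x = frechet_derivative H (at x)"

lemma DH: "(H has_derivative DH x) (at x)"
  unfolding DH_def using Hd frechet_derivative_works by blast

lemma DH_lin: "linear (DH x)"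
  using DH has_derivative_linear by blast

lemma grad_a_eq: "grad_a H x = (\<chi> i. DH x (axis i 1, 0))"
proof -
  have "((\<lambda>a. H (a, snd x)) has_derivative (DH x \<circ> (\<lambda>h. (h, 0)))) (at (fst x))"
  proof (rule has_derivative_compose[where f="\<lambda>a. (a, snd x)", unfolded o_def, THEN has_derivative_eq_rhs])
    show "((\<lambda>a. (a, snd x)) has_derivative (\<lambda>h. (h, 0))) (at (fst x))"
      by (auto intro!: derivative_eq_intros)
    show "(H has_derivative DH x) (at (fst x, snd x))" using DH by simp
  qed (auto simp: o_def)
  then have "frechet_derivative (\<lambda>a. H (a, snd x)) (at (fst x)) = DH x \<circ> (\<lambda>h. (h, 0))"
    using frechet_derivative_at by metis
  then show ?thesis unfolding grad_a_def grad_def by simp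
qed

lemma grad_u_eq: "grad_u H x = (\<chi> j. DH x (0, axis j 1))"
proof -
  have "((\<lambda>v. H (fst x, v)) has_derivative (DH x \<circ> (\<lambda>h. (0, h)))) (at (snd x))"
  proof (rule has_derivative_compose[where f="\<lambda>v. (fst x, v)", unfolded o_def, THEN has_derivative_eq_rhs])
    show "((\<lambda>v. (fst x, v)) has_derivative (\<lambda>h. (0, h))) (at (snd x))"
      by (auto intro!: derivative_eq_intros)
    show "(H has_derivative DH x) (at (fst x, snd x))" using DH by simp
  qed (auto simp: o_def)
  then have "frechet_derivative (\<lambda>v. H (fst x, v)) (at (snd x)) = DH x \<circ> (\<lambda>h. (0, h))"
    using frechet_derivative_at by metis
  then show ?thesis unfolding grad_u_def grad_def by simp
qed

lemma DH_split: "DH x (ha, hu) = ha \<bullet> grad_a H x + hu \<bullet> grad_u H x"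
proof -
  interpret L: linear "DH x" by (rule DH_lin)
  interpret G1: linear "\<lambda>h. DH x (h, 0::real^'s)"
  proof
    fix b1 b2 :: "real^'m" show "DH x (b1 + b2, 0) = DH x (b1, 0) + DH x (b2, 0)"
      using L.add[of "(b1, 0)" "(b2, 0)"] by simp
    fix r :: real and b :: "real^'m" show "DH x (r *\<^sub>R b, 0) = r *\<^sub>R DH x (b, 0)"
      using L.scale[of r "(b, 0)"] by simp
  qed
  interpret G2: linear "\<lambda>h. DH x (0::real^'m, h)"
  proof
    fix b1 b2 :: "real^'s" show "DH x (0, b1 + b2) = DH x (0, b1) + DH x (0, b2)"
      using L.add[of "(0, b1)" "(0, b2)"] by simp
    fix r :: real and b :: "real^'s" show "DH x (0, r *\<^sub>R b) = r *\<^sub>R DH x (0, b)"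
      using L.scale[of r "(0, b)"] by simp
  qed
  have "DH x (ha, hu) = DH x (ha, 0) + DH x (0, hu)" using L.add[of "(ha,0)" "(0,hu)"] by simp
  moreover have "DH x (ha, 0) = ha \<bullet> grad_a H x"
  proof -
    have "DH x (ha, 0) = DH x (\<Sum>i\<in>UNIV. ha $ i *\<^sub>R axis i 1, 0)"
      using basis_expansion[of ha] by (simp add: scalar_mult_eq_scaleR)
    also have "\<dots> = (\<Sum>i\<in>UNIV. ha $ i * DH x (axis i 1, 0))"
      by (simp add: G1.sum G1.scale)
    finally show ?thesis by (simp add: grad_a_eq inner_vec_def mult.commute)
  qed
  moreover have "DH x (0, hu) = hu \<bullet> grad_u H x"
  proof -
    have "DH x (0, hu) = DH x (0, \<Sum>i\<in>UNIV. hu $ i *\<^sub>R axis i 1)"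
      using basis_expansion[of hu] by (simp add: scalar_mult_eq_scaleR)
    also have "\<dots> = (\<Sum>i\<in>UNIV. hu $ i * DH x (0, axis i 1))"
      by (simp add: G2.sum G2.scale)
    finally show ?thesis by (simp add: grad_u_eq inner_vec_def mult.commute)
  qed
  ultimately show ?thesis by simp
qed

end


lemma mv_neg: "(- A) *v (x::real^'n) = - (A *v (x::real^'n)) " for A :: "real^'n^'m"
  by (simp add: matrix_vector_mult_def vec_eq_iff sum_negf)

lemma inner_transpose: "(x::real^'n) \<bullet> (transpose A *v y) = (A *v x) \<bullet> y" for A :: "real^'n^'m"
  by (metis dot_lmul_matrix inner_commute transpose_matrix_vector)

lemma skew_zero: "skew A \<Longrightarrow> (x::real^'n) \<bullet> (A *v x) = 0"
  using inner_transpose[of x A x] unfolding skew_def by (simp add: mv_neg inner_commute)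

lemma sym_inner: "transpose A = A \<Longrightarrow> (x::real^'n) \<bullet> (A *v y) = (A *v x) \<bullet> y"
  using inner_transpose[of x A y] by simp

lemma two_vec: "(2::real) *\<^sub>R (v::real^'n) = 2 * v"
  by (simp add: vec_eq_iff)

locale pH =
  fixes H :: "(real^'m) \<times> (real^'s) \<Rightarrow> real"
    and Jaa Raa Jc1 Rc1 :: "(real^'m) \<times> (real^'s) \<Rightarrow> real^'m^'m"
    and Jau Rau :: "(real^'m) \<times> (real^'s) \<Rightarrow> real^'s^'m"
    and Juu Ruu :: "(real^'m) \<times> (real^'s) \<Rightarrow> real^'s^'s"
    and K :: "real^'m^'m"
    and dbar :: "real^'m"
    and xbar :: "(real^'m) \<times> (real^'s)"
  assumes H_smooth: "smooth H"
    and smooth_J: "smooth Jaa" "smooth Jau" "smooth Juu"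
    and smooth_R: "smooth Raa" "smooth Rau" "smooth Ruu"
    and smooth_c: "smooth Jc1" "smooth Rc1"
    and J_skew: "\<forall>x. skew (Jaa x) \<and> skew (Juu x)"
    and R_psd: "\<forall>x va vu. va \<bullet> (Raa x *v va) + va \<bullet> (Rau x *v vu)
                         + vu \<bullet> (transpose (Rau x) *v va) + vu \<bullet> (Ruu x *v vu) \<ge> 0"
    and argmin: "{x. \<forall>y. H x + fst x \<bullet> dbar \<le> H y + fst y \<bullet> dbar} = {xbar}"
    and K_pd: "sym_pd K"
    and Jc1_skew: "\<forall>x. skew (Jc1 x)"
    and Rc1_pd: "\<forall>x. pos_def (Rc1 x)"
begin

lemma Hd: "H differentiable (at x)"
  using smooth_real_diff[OF smooth_scalar[OF H_smooth]] .

lemma Hder: "(H has_derivative DH H x) (at x)"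
  using DH[OF Hd] .

lemma Hsplit: "DH H x (ha, hu) = ha \<bullet> grad_a H x + hu \<bullet> grad_u H x"
  using DH_split[OF Hd] .

lemma grad_a_cont: "continuous_on UNIV (grad_a H)"
proof -
  have "grad_a H = (\<lambda>x. \<chi> i. frechet_derivative H (at x) (axis i 1, 0))"
    using grad_a_eq[OF Hd] by (simp add: fun_eq_iff Submission.DH_def[OF Hd])
  moreover have "continuous_on UNIV (\<lambda>x. \<chi> i. frechet_derivative H (at x) (axis i 1, 0))"
    by (intro continuous_intros smooth_real_partial_cont[OF smooth_scalar[OF H_smooth]])
       (auto simp: Basis_prod_def)
  ultimately show ?thesis by simp
qed

lemma grad_u_cont: "continuous_on UNIV (grad_u H)"
proof -
  have "grad_u H = (\<lambda>x. \<chi> i. frechet_derivative H (at x) (0, axis i 1))"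
    using grad_u_eq[OF Hd] by (simp add: fun_eq_iff Submission.DH_def[OF Hd])
  moreover have "continuous_on UNIV (\<lambda>x. \<chi> i. frechet_derivative H (at x) (0, axis i 1))"
    by (intro continuous_intros smooth_real_partial_cont[OF smooth_scalar[OF H_smooth]])
       (auto simp: Basis_prod_def)
  ultimately show ?thesis by simp
qed

lemma K_inv: "K *v (matrix_inv K *v y) = y"
proof -
  have "\<forall>x. K *v x = 0 \<longrightarrow> x = 0"
    using K_pd unfolding sym_pd_def by (metis inner_zero_right less_irrefl)
  then obtain B where "B ** K = mat 1" using matrix_left_invertible_ker by blast
  then have "K ** B = mat 1 \<and> B ** K = mat 1" using matrix_left_right_inverse by blast
  then have "K ** matrix_inv K = mat 1 \<and> matrix_inv K ** K = mat 1"
    unfolding matrix_inv_def by (rule someI)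
  then show ?thesis by (simp add: matrix_vector_mul_assoc)
qed

lemma K_sym: "transpose K = K" using K_pd by (simp add: sym_pd_def)

lemma K_nonneg: "0 \<le> q \<bullet> (K *v q)"
  using K_pd unfolding sym_pd_def by (cases "q = 0") (auto intro: less_imp_le)

lemma K_pos: "q \<noteq> 0 \<Longrightarrow> 0 < q \<bullet> (K *v q)"
  using K_pd unfolding sym_pd_def by auto


lemma Fc_eq: "closed_loop Jaa Jau Juu Raa Rau Ruu Jc1 Rc1 K H dbar (wa, wu, wc) =
  ((Jc1 (wa,wu) - Rc1 (wa,wu)) *v (grad_a H (wa,wu) + K *v wc) + (Jau (wa,wu) + Rau (wa,wu)) *v grad_u H (wa,wu),
   - (transpose (Jau (wa,wu) + Rau (wa,wu)) *v (grad_a H (wa,wu) + dbar)) + (Juu (wa,wu) - Ruu (wa,wu)) *v grad_u H (wa,wu),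
   (Jc1 (wa,wu) - Rc1 (wa,wu)) *v (grad_a H (wa,wu) + K *v wc))"
  unfolding closed_loop_def plant_a_def plant_u_def ctrl_u_def ctrl_c_def dist_u_def
  by (simp add: Let_def algebra_simps mv_neg two_vec)


definition "c0 = matrix_inv K *v dbar"
definition "Wf p = H (fst p, fst (snd p)) + fst p \<bullet> dbar
   + (1/2) * ((snd (snd p) - c0) \<bullet> (K *v (snd (snd p) - c0)))"
definition "DWf p h = DH H (fst p, fst (snd p)) (fst h, fst (snd h)) + fst h \<bullet> dbar
   + (1/2) * ((snd (snd p) - c0) \<bullet> (K *v snd (snd h)) + snd (snd h) \<bullet> (K *v (snd (snd p) - c0)))"
definition "Fc = closed_loop Jaa Jau Juu Raa Rau Ruu Jc1 Rc1 K H dbar"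
definition "wbar = (fst xbar, snd xbar, c0)"

lemma Kc0: "K *v c0 = dbar" unfolding c0_def by (rule K_inv)

lemma Wf_deriv: "(Wf has_derivative DWf p) (at p)"
proof -
  have h0: "((\<lambda>p::(real^'m)\<times>(real^'s)\<times>(real^'m). (fst p, fst (snd p))) has_derivative (\<lambda>h. (fst h, fst (snd h)))) (at p)"
    by (intro derivative_eq_intros) auto
  have h1: "((\<lambda>p. H (fst p, fst (snd p))) has_derivative (\<lambda>h. DH H (fst p, fst (snd p)) (fst h, fst (snd h)))) (at p)"
    using has_derivative_compose[OF h0 Hder] by (simp add: o_def)
  have h2: "((\<lambda>p::(real^'m)\<times>(real^'s)\<times>(real^'m). fst p \<bullet> dbar) has_derivative (\<lambda>h. fst h \<bullet> dbar)) (at p)"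
    by (intro derivative_eq_intros) auto
  have h3: "((\<lambda>p::(real^'m)\<times>(real^'s)\<times>(real^'m). snd (snd p) - c0) has_derivative (\<lambda>h. snd (snd h))) (at p)"
    by (intro derivative_eq_intros) auto
  have h4: "((\<lambda>p. K *v (snd (snd p) - c0)) has_derivative (\<lambda>h. K *v snd (snd h))) (at p)"
    by (rule bounded_linear.has_derivative[OF matrix_vector_mul_bounded_linear h3])
  have h5: "((\<lambda>p. (snd (snd p) - c0) \<bullet> (K *v (snd (snd p) - c0))) has_derivative
     (\<lambda>h. (snd (snd p) - c0) \<bullet> (K *v snd (snd h)) + snd (snd h) \<bullet> (K *v (snd (snd p) - c0)))) (at p)"
    by (rule has_derivative_inner[OF h3 h4])
  show ?thesis unfolding Wf_def DWf_def
    by (intro has_derivative_add h1 h2 has_derivative_mult_right h5)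
qed

lemma DWf_eq: "DWf (wa, wu, wc) (ha, hu, hc) =
   ha \<bullet> (grad_a H (wa, wu) + dbar) + hu \<bullet> grad_u H (wa, wu) + (K *v wc - dbar) \<bullet> hc"
proof -
  have "(wc - c0) \<bullet> (K *v hc) = (K *v wc - dbar) \<bullet> hc"
    using sym_inner[OF K_sym, of "wc - c0" hc] by (simp add: matrix_vector_mult_diff_distrib Kc0)
  moreover have "hc \<bullet> (K *v (wc - c0)) = (K *v wc - dbar) \<bullet> hc"
    by (simp add: matrix_vector_mult_diff_distrib Kc0 inner_commute)
  ultimately show ?thesis unfolding DWf_def by (simp add: Hsplit inner_add_right)
qed


lemma Wd_eq:
  fixes wa :: "real^'m" and wu :: "real^'s" and wc :: "real^'m"
  defines "x \<equiv> (wa, wu)"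
  defines "z \<equiv> grad_a H x + K *v wc"
  shows "DWf (wa, wu, wc) (Fc (wa, wu, wc)) = - (z \<bullet> (Rc1 x *v z)) - grad_u H x \<bullet> (Ruu x *v grad_u H x)"
proof -
  define ga gu A M N where "ga = grad_a H x" "gu = grad_u H x" "A = grad_a H x + dbar"
    "M = Jc1 x - Rc1 x" "N = Jau x + Rau x"
  have F: "Fc (wa, wu, wc) = (M *v z + N *v gu, - (transpose N *v A) + (Juu x - Ruu x) *v gu, M *v z)"
    unfolding Fc_def Fc_eq ga_gu_A_M_N_def z_def x_def ..
  have D: "DWf (wa, wu, wc) (Fc (wa, wu, wc)) = (M *v z + N *v gu) \<bullet> A
      + (- (transpose N *v A) + (Juu x - Ruu x) *v gu) \<bullet> gu + (z - A) \<bullet> (M *v z)"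
    unfolding F DWf_eq by (simp add: ga_gu_A_M_N_def z_def x_def inner_commute)
  have e1: "(transpose N *v A) \<bullet> gu = (N *v gu) \<bullet> A"
    using inner_transpose[of gu N A] by (simp add: inner_commute)
  have e2: "(Juu x *v gu) \<bullet> gu = 0" using skew_zero[of "Juu x" gu] J_skew by (simp add: inner_commute)
  have e3: "z \<bullet> (Jc1 x *v z) = 0" using skew_zero[of "Jc1 x" z] Jc1_skew by simp
  have "(M *v z + N *v gu) \<bullet> A = A \<bullet> (M *v z) + (N *v gu) \<bullet> A" by (simp add: inner_add_left inner_commute inner_add_right)
  moreover have "(- (transpose N *v A) + (Juu x - Ruu x) *v gu) \<bullet> gu
      = - ((transpose N *v A) \<bullet> gu) + (Juu x *v gu) \<bullet> gu - gu \<bullet> (Ruu x *v gu)"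
    by (simp add: inner_add_left inner_diff_left matrix_vector_mult_diff_rdistrib inner_commute inner_diff_right)
  moreover have "(z - A) \<bullet> (M *v z) = z \<bullet> (Jc1 x *v z) - z \<bullet> (Rc1 x *v z) - A \<bullet> (M *v z)"
    by (simp add: ga_gu_A_M_N_def inner_diff_left inner_diff_right matrix_vector_mult_diff_rdistrib)
  ultimately show ?thesis using D e1 e2 e3 by (simp add: ga_gu_A_M_N_def)
qed


lemma Wd_nonpos: "DWf p (Fc p) \<le> 0"
proof -
  obtain wa wu wc where p: "p = (wa, wu, wc)" by (cases p) auto
  define x where "x = (wa, wu)"
  define z where "z = grad_a H x + K *v wc"
  have "pos_def (Rc1 x)" using Rc1_pd by (simp add: x_def)
  then have "0 \<le> z \<bullet> (Rc1 x *v z)" unfolding pos_def_def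
    by (cases "z = 0") (auto intro: less_imp_le)
  moreover have "0 \<le> grad_u H x \<bullet> (Ruu x *v grad_u H x)"
    using spec[OF spec[OF spec[OF R_psd, of x], of 0], of "grad_u H x"] by simp
  ultimately show ?thesis unfolding p using Wd_eq[of wa wu wc] by (simp add: x_def z_def)
qed

lemma cc: "continuous_on UNIV f \<Longrightarrow> continuous_on S (\<lambda>p::(real^'m)\<times>(real^'s)\<times>(real^'m). f (fst p, fst (snd p)))"
  by (rule continuous_on_compose2[of UNIV f]) (auto intro!: continuous_intros)

lemma Fc_cont: "continuous_on UNIV Fc"
proof -
  define X where "X p = (fst p, fst (snd p))" for p :: "(real^'m)\<times>(real^'s)\<times>(real^'m)"
  have "Fc = (\<lambda>p. ((Jc1 (X p) - Rc1 (X p)) *v (grad_a H (X p) + K *v snd (snd p)) + (Jau (X p) + Rau (X p)) *v grad_u H (X p),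
   - (transpose (Jau (X p) + Rau (X p)) *v (grad_a H (X p) + dbar)) + (Juu (X p) - Ruu (X p)) *v grad_u H (X p),
   (Jc1 (X p) - Rc1 (X p)) *v (grad_a H (X p) + K *v snd (snd p))))" (is "_ = ?R")
  proof (rule ext)
    fix p :: "(real^'m)\<times>(real^'s)\<times>(real^'m)"
    obtain a b c where "p = (a, b, c)" by (cases p) auto
    then show "Fc p = ?R p" unfolding Fc_def X_def by (simp only: Fc_eq fst_conv snd_conv)
  qed
  moreover have c1: "continuous_on UNIV (\<lambda>p. Jc1 (X p))" unfolding X_def by (rule cc[OF smooth_cont[OF smooth_c(1)]])
  moreover have c2: "continuous_on UNIV (\<lambda>p. Rc1 (X p))" unfolding X_def by (rule cc[OF smooth_cont[OF smooth_c(2)]])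
  moreover have c3: "continuous_on UNIV (\<lambda>p. Jau (X p))" unfolding X_def by (rule cc[OF smooth_cont[OF smooth_J(2)]])
  moreover have c4: "continuous_on UNIV (\<lambda>p. Rau (X p))" unfolding X_def by (rule cc[OF smooth_cont[OF smooth_R(2)]])
  moreover have c5: "continuous_on UNIV (\<lambda>p. Juu (X p))" unfolding X_def by (rule cc[OF smooth_cont[OF smooth_J(3)]])
  moreover have c6: "continuous_on UNIV (\<lambda>p. Ruu (X p))" unfolding X_def by (rule cc[OF smooth_cont[OF smooth_R(3)]])
  moreover have c7: "continuous_on UNIV (\<lambda>p. grad_a H (X p))" unfolding X_def by (rule cc[OF grad_a_cont])
  moreover have c8: "continuous_on UNIV (\<lambda>p. grad_u H (X p))" unfolding X_def by (rule cc[OF grad_u_cont])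
  moreover have c9: "continuous_on UNIV (\<lambda>p::(real^'m)\<times>(real^'s)\<times>(real^'m). snd (snd p))"
    by (intro continuous_intros)
  ultimately show ?thesis
    by (simp only:) (intro continuous_on_Pair continuous_on_add continuous_on_diff continuous_on_minus mv_cont transpose_cont continuous_on_const c1 c2 c3 c4 c5 c6 c7 c8 c9)
qed

lemma HH_der: "((\<lambda>x. H x + fst x \<bullet> dbar) has_derivative (\<lambda>h. DH H x h + fst h \<bullet> dbar)) (at x)"
proof -
  have "((\<lambda>x::(real^'m)\<times>(real^'s). fst x \<bullet> dbar) has_derivative (\<lambda>h. fst h \<bullet> dbar)) (at x)"
    by (intro derivative_eq_intros) auto
  then show ?thesis by (rule has_derivative_add[OF Hder])
qed

lemma xbar_min: "H xbar + fst xbar \<bullet> dbar \<le> H y + fst y \<bullet> dbar"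
  using argmin by blast

lemma xbar_strict: "y \<noteq> xbar \<Longrightarrow> H xbar + fst xbar \<bullet> dbar < H y + fst y \<bullet> dbar"
proof (rule ccontr)
  assume "y \<noteq> xbar" "\<not> H xbar + fst xbar \<bullet> dbar < H y + fst y \<bullet> dbar"
  then have "\<forall>z. H y + fst y \<bullet> dbar \<le> H z + fst z \<bullet> dbar" using xbar_min by (meson not_less order_trans)
  then have "y \<in> {xbar}" using argmin by blast
  then show False using \<open>y \<noteq> xbar\<close> by simp
qed

lemma grad_xbar: "grad_a H xbar = - dbar" "grad_u H xbar = 0"
proof -
  have "(\<lambda>h. DH H xbar h + fst h \<bullet> dbar) = (\<lambda>h. 0)"
    by (rule has_derivative_local_min[OF HH_der]) (auto intro: always_eventually xbar_min)
  then have Z: "DH H xbar h + fst h \<bullet> dbar = 0" for h by metis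
  have "(grad_a H xbar + dbar) \<bullet> (grad_a H xbar + dbar) = 0"
    using Z[of "(grad_a H xbar + dbar, 0)"] by (simp add: Hsplit inner_add_left inner_commute)
  then have "grad_a H xbar + dbar = 0" by simp
  then show "grad_a H xbar = - dbar" by (simp only: eq_neg_iff_add_eq_0)
  have "grad_u H xbar \<bullet> grad_u H xbar = 0"
    using Z[of "(0, grad_u H xbar)"] by (simp add: Hsplit)
  then show "grad_u H xbar = 0" by simp
qed

lemma equil: "Fc wbar = 0"
proof -
  have "Fc wbar = Fc (fst xbar, snd xbar, c0)" by (simp add: wbar_def)
  also have "\<dots> = 0" unfolding Fc_def Fc_eq using grad_xbar Kc0 by (simp add: zero_prod_def)
  finally show ?thesis .
qed

lemma grad_HH: "grad_a (\<lambda>x. H x + fst x \<bullet> dbar) x = grad_a H x + dbar"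
proof -
  have d: "(\<lambda>x. H x + fst x \<bullet> dbar) differentiable (at y)" for y
    using HH_der differentiable_def by blast
  have "DH (\<lambda>x. H x + fst x \<bullet> dbar) x = (\<lambda>h. DH H x h + fst h \<bullet> dbar)"
    unfolding Submission.DH_def[OF d] using frechet_derivative_at[OF HH_der] by simp
  then have "grad_a (\<lambda>x. H x + fst x \<bullet> dbar) x = (\<chi> i. DH H x (axis i 1, 0) + axis i 1 \<bullet> dbar)"
    using grad_a_eq[OF d, of x] by simp
  also have "\<dots> = grad_a H x + dbar"
    unfolding grad_a_eq[OF Hd, of x] vec_eq_iff
  proof
    fix i show "(\<chi> i. DH H x (axis i 1, 0) + axis i 1 \<bullet> dbar) $ i = ((\<chi> i. DH H x (axis i 1, 0)) + dbar) $ i"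
      using inner_axis[of dbar i 1] by (simp add: inner_commute)
  qed
  finally show ?thesis .
qed


lemma Wf_alt: "Wf (wa, wu, wc) = (H (wa, wu) + fst (wa, wu) \<bullet> dbar) + (1/2) * ((wc - c0) \<bullet> (K *v (wc - c0)))"
  unfolding Wf_def by simp

lemma W_min: "p \<noteq> wbar \<Longrightarrow> Wf wbar < Wf p"
proof -
  assume "p \<noteq> wbar"
  obtain wa wu wc where p: "p = (wa, wu, wc)" by (cases p) auto
  have Wb: "Wf wbar = H xbar + fst xbar \<bullet> dbar" unfolding wbar_def Wf_def by simp
  show ?thesis
  proof (cases "(wa, wu) = xbar")
    case True
    then have "wc \<noteq> c0" using \<open>p \<noteq> wbar\<close> p wbar_def by auto
    then have "0 < (wc - c0) \<bullet> (K *v (wc - c0))" using K_pos by simp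
    then show ?thesis unfolding p Wf_alt Wb True by simp
  next
    case False
    then have "H xbar + fst xbar \<bullet> dbar < H (wa, wu) + fst (wa, wu) \<bullet> dbar" by (rule xbar_strict)
    moreover have "0 \<le> (wc - c0) \<bullet> (K *v (wc - c0))" by (rule K_nonneg)
    ultimately show ?thesis unfolding p Wf_alt Wb by simp
  qed
qed

lemma lyap_inst: "lyap Fc Wf DWf wbar"
  by unfold_locales (auto intro: Fc_cont Wf_deriv Wd_nonpos W_min)

lemma detect_link:
  assumes "DWf p (Fc p) = 0"
  shows "grad_a (\<lambda>x. H x + fst x \<bullet> dbar) (fst p, fst (snd p)) + K *v (snd (snd p) - matrix_inv K *v dbar) = 0"
proof -
  obtain wa wu wc where p: "p = (wa, wu, wc)" by (cases p) auto
  define x where "x = (wa, wu)"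
  define z where "z = grad_a H x + K *v wc"
  have "pos_def (Rc1 x)" using Rc1_pd by (simp add: x_def)
  then have a: "0 \<le> z \<bullet> (Rc1 x *v z)" unfolding pos_def_def
    by (cases "z = 0") (auto intro: less_imp_le)
  have b: "0 \<le> grad_u H x \<bullet> (Ruu x *v grad_u H x)"
    using spec[OF spec[OF spec[OF R_psd, of x], of 0], of "grad_u H x"] by simp
  have "- (z \<bullet> (Rc1 x *v z)) - grad_u H x \<bullet> (Ruu x *v grad_u H x) = 0"
    using assms Wd_eq[of wa wu wc] unfolding p by (simp add: x_def z_def)
  then have "z \<bullet> (Rc1 x *v z) = 0" using a b by linarith
  then have "z = 0" using \<open>pos_def (Rc1 x)\<close> unfolding pos_def_def by (metis less_irrefl)
  moreover have "grad_a (\<lambda>x. H x + fst x \<bullet> dbar) (fst p, fst (snd p)) + K *v (snd (snd p) - matrix_inv K *v dbar) = z"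
    unfolding p z_def x_def grad_HH by (simp add: matrix_vector_mult_diff_distrib K_inv)
  ultimately show ?thesis by simp
qed

lemma K_lower: "\<exists>l>0. \<forall>q. l * (norm q)^2 \<le> q \<bullet> (K *v q)"
proof -
  obtain u1 :: "real^'m" where "norm u1 = 1" using vector_choose_size[of 1] by auto
  then have ne: "sphere (0::real^'m) 1 \<noteq> {}" by auto
  have "continuous_on UNIV (\<lambda>q::real^'m. q \<bullet> (K *v q))" by (intro continuous_intros)
  then obtain u0 where u0: "u0 \<in> sphere 0 1" "\<And>q. q \<in> sphere 0 1 \<Longrightarrow> u0 \<bullet> (K *v u0) \<le> q \<bullet> (K *v q)"
    using continuous_attains_inf[OF compact_sphere ne] by (meson continuous_on_subset subset_UNIV)
  have "u0 \<noteq> 0" using u0(1) by auto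
  then have l: "0 < u0 \<bullet> (K *v u0)" by (rule K_pos)
  show ?thesis
  proof (intro exI[of _ "u0 \<bullet> (K *v u0)"] conjI allI l)
    fix q :: "real^'m"
    show "u0 \<bullet> (K *v u0) * (norm q)^2 \<le> q \<bullet> (K *v q)"
    proof (cases "q = 0")
      case True then show ?thesis by simp
    next
      case False
      define u where "u = (1 / norm q) *\<^sub>R q"
      have "u \<in> sphere 0 1" using False by (simp add: u_def)
      then have "u0 \<bullet> (K *v u0) \<le> u \<bullet> (K *v u)" by (rule u0(2))
      also have "u \<bullet> (K *v u) = (q \<bullet> (K *v q)) / (norm q)^2"
        by (simp add: u_def matrix_vector_mult_scaleR power2_eq_square)
      finally show ?thesis using False by (simp add: pos_le_divide_eq)
    qed
  qed
qed

lemma t_le: "(t::real) \<le> 1 + t^2"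
proof (cases "t \<le> 1")
  case True then show ?thesis by (simp add: add_increasing2)
next
  case False
  then have "t * 1 \<le> t * t" by (intro mult_left_mono) auto
  then show ?thesis by (simp add: power2_eq_square)
qed

lemma sublevel_bounded:
  assumes "radially_unbounded (\<lambda>x. H x + fst x \<bullet> dbar)"
  shows "bounded {p. Wf p \<le> M}"
proof -
  define m0 where "m0 = H xbar + fst xbar \<bullet> dbar"
  obtain l where l: "l > 0" "\<And>q. l * (norm q)^2 \<le> q \<bullet> (K *v q)" using K_lower by blast
  have "\<forall>\<^sub>F x in at_infinity. M + 1 \<le> H x + fst x \<bullet> dbar"
    using assms unfolding radially_unbounded_def filterlim_at_top by blast
  then obtain b where b: "\<And>x. b \<le> norm x \<Longrightarrow> M + 1 \<le> H x + fst x \<bullet> dbar"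
    unfolding eventually_at_infinity by blast
  show ?thesis unfolding bounded_iff
  proof (intro exI[of _ "2 * \<bar>b\<bar> + norm c0 + 1 + 2 * \<bar>M - m0\<bar> / l"] allI impI ballI)
    fix p assume "p \<in> {p. Wf p \<le> M}"
    then have W: "Wf p \<le> M" by simp
    obtain wa wu wc where p: "p = (wa, wu, wc)" by (cases p) auto
    have q0: "0 \<le> (wc - c0) \<bullet> (K *v (wc - c0))" by (rule K_nonneg)
    have hm: "m0 \<le> H (wa, wu) + fst (wa, wu) \<bullet> dbar" unfolding m0_def by (rule xbar_min)
    have "H (wa, wu) + fst (wa, wu) \<bullet> dbar \<le> M" using W q0 unfolding p Wf_alt by simp
    then have nx: "norm (wa, wu) < b"
    proof -
      assume le: "H (wa, wu) + fst (wa, wu) \<bullet> dbar \<le> M"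
      show ?thesis
      proof (rule ccontr)
        assume "\<not> norm (wa, wu) < b"
        then have "M + 1 \<le> H (wa, wu) + fst (wa, wu) \<bullet> dbar" using b[of "(wa, wu)"] by simp
        then show False using le by simp
      qed
    qed
    have "l * (norm (wc - c0))^2 \<le> 2 * (M - m0)" using l(2)[of "wc - c0"] W hm unfolding p Wf_alt by simp
    moreover have "2 * (M - m0) \<le> 2 * \<bar>M - m0\<bar>" by (rule mult_left_mono[OF abs_ge_self]) simp
    ultimately have "l * (norm (wc - c0))^2 \<le> 2 * \<bar>M - m0\<bar>" by linarith
    then have "(norm (wc - c0))^2 \<le> 2 * \<bar>M - m0\<bar> / l" using l(1) by (simp add: pos_le_divide_eq mult.commute)
    moreover have "norm (wc - c0) \<le> 1 + (norm (wc - c0))^2" by (rule t_le)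
    ultimately have nc: "norm (wc - c0) \<le> 1 + 2 * \<bar>M - m0\<bar> / l" by linarith
    have "norm wc \<le> norm c0 + norm (wc - c0)" using norm_triangle_ineq[of c0 "wc - c0"] by simp
    moreover have "norm p \<le> norm wa + norm wu + norm wc"
      unfolding p using norm_Pair_le[of wa "(wu, wc)"] norm_Pair_le[of wu wc] by linarith
    moreover have "norm wa \<le> norm (wa, wu)" "norm wu \<le> norm (wa, wu)"
      using norm_fst_le[of wa wu] norm_snd_le[of wu wa] by auto
    ultimately show "norm p \<le> 2 * \<bar>b\<bar> + norm c0 + 1 + 2 * \<bar>M - m0\<bar> / l" using nx nc by linarith
  qed
qed

end

theorem proposition3:
  fixes H :: "(real^'m) \<times> (real^'s) \<Rightarrow> real"
    and Jaa Raa Jc1 Rc1 :: "(real^'m) \<times> (real^'s) \<Rightarrow> real^'m^'m"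
    and Jau Rau :: "(real^'m) \<times> (real^'s) \<Rightarrow> real^'s^'m"
    and Juu Ruu :: "(real^'m) \<times> (real^'s) \<Rightarrow> real^'s^'s"
    and K :: "real^'m^'m"
    and dbar :: "real^'m"
    and xbar :: "(real^'m) \<times> (real^'s)"
  defines "HH \<equiv> (\<lambda>x. H x + fst x \<bullet> dbar)"
    and "F \<equiv> closed_loop Jaa Jau Juu Raa Rau Ruu Jc1 Rc1 K H dbar"
    and "wbar \<equiv> (fst xbar, snd xbar, matrix_inv K *v dbar)"
    and "Yu \<equiv> (\<lambda>w::(real^'m) \<times> (real^'s) \<times> (real^'m).
                 grad_a (\<lambda>x. H x + fst x \<bullet> dbar) (fst w, fst (snd w)) + K *v (snd (snd w) - matrix_inv K *v dbar))"
  assumes H_smooth: "smooth H" and H_nonneg: "\<forall>x. H x \<ge> 0"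
    and smooth_J: "smooth Jaa" "smooth Jau" "smooth Juu"
    and smooth_R: "smooth Raa" "smooth Rau" "smooth Ruu"
    and smooth_c: "smooth Jc1" "smooth Rc1"
    and J_skew: "\<forall>x. skew (Jaa x) \<and> skew (Juu x)"
    and R_sym: "\<forall>x. transpose (Raa x) = Raa x \<and> transpose (Ruu x) = Ruu x"
    and R_psd: "\<forall>x va vu. va \<bullet> (Raa x *v va) + va \<bullet> (Rau x *v vu)
                         + vu \<bullet> (transpose (Rau x) *v va) + vu \<bullet> (Ruu x *v vu) \<ge> 0"
    and argmin: "{x. \<forall>y. HH x \<le> HH y} = {xbar}"
    and K_pd: "sym_pd K"
    and Jc1_skew: "\<forall>x. skew (Jc1 x)"
    and Rc1_pd: "\<forall>x. pos_def (Rc1 x)"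
  shows "(equilibrium F wbar \<and> stable F wbar)
       \<and> (detectable F Yu wbar \<longrightarrow> asymp_stable F wbar)
       \<and> (radially_unbounded HH \<longrightarrow>
            globally_stable F wbar \<and> (detectable F Yu wbar \<longrightarrow> globally_asymp_stable F wbar))"
proof -
  interpret P: pH H Jaa Raa Jc1 Rc1 Jau Rau Juu Ruu K dbar xbar
    using H_smooth smooth_J smooth_R smooth_c J_skew R_psd argmin K_pd Jc1_skew Rc1_pd
    unfolding HH_def by unfold_locales auto
  interpret L: lyap P.Fc P.Wf P.DWf P.wbar by (rule P.lyap_inst)
  have FF: "F = P.Fc" unfolding F_def P.Fc_def ..
  have WW: "wbar = P.wbar" unfolding wbar_def P.wbar_def P.c0_def ..
  have D: "(v \<longlongrightarrow> P.wbar) at_top"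
    if det: "detectable F Yu wbar" and v: "sol P.Fc v" and z: "\<forall>t\<ge>0. P.DWf (v t) (P.Fc (v t)) = 0" for v
  proof -
    have "Yu (v t) = 0" if "t \<ge> 0" for t
      unfolding Yu_def using P.detect_link[of "v t"] z that by auto
    then show ?thesis using det v unfolding detectable_def FF WW by blast
  qed
  show ?thesis
    unfolding FF WW
  proof (intro conjI impI)
    show "equilibrium P.Fc P.wbar" unfolding equilibrium_def by (rule P.equil)
    show "stable P.Fc P.wbar" by (rule L.stable)
    show "asymp_stable P.Fc P.wbar" if "detectable P.Fc Yu P.wbar"
      using L.asymp D that unfolding FF WW by blast
    show "globally_stable P.Fc P.wbar" if "radially_unbounded HH"
      using L.glob_stable P.sublevel_bounded that unfolding HH_def by blast
    show "globally_asymp_stable P.Fc P.wbar" if "radially_unbounded HH" "detectable P.Fc Yu P.wbar"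
      using L.glob_asymp[OF P.sublevel_bounded] D that unfolding FF WW HH_def by blast
  qed
qed

end
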